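(* If $S$ is a cyclotomic numerical semigroup, then $\mathrm P_S$ is selfreciprocal, i.e. $x^{\deg \mathrm P_S}\,\mathrm P_S(1/x)=\mathrm P_S(x)$.
   Context: A numerical semigroup is a submonoid $S$ of $(\mathbb N,+)$ with $\mathbb N\setminus S$ finite; its semigroup polynomial is $\mathrm P_S(x)=(1-x)\sum_{s\in S}x^s$. $S$ is cyclotomic if $\mathrm P_S$ (a monic integer polynomial) has all its complex roots in the closed unit disc. *)

theory Defs
  imports "HOL-Computational_Algebra.Polynomial" "HOL-Analysis.Analysis"
begin

definition numerical_semigroup :: "nat set \<Rightarrow> bool" where
  "numerical_semigroup S \<longleftrightarrow> 0 \<in> S \<and> (\<forall>a\<in>S. \<forall>b\<in>S. a + b \<in> S) \<and> finite (UNIV - S)"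

text \<open>Semigroup polynomial P_S(x) = (1 - x) * sum_{s in S} x^s, given by its coefficients:
  the coefficient of x^k is [k in S] - [k - 1 in S] (the second term only for k >= 1).\<close>
definition semigroup_poly :: "nat set \<Rightarrow> int poly" where
  "semigroup_poly S = Abs_poly (\<lambda>k. (if k \<in> S then 1 else 0)
       - (if k \<ge> 1 \<and> k - 1 \<in> S then 1 else 0))"

definition cyclotomic_semigroup :: "nat set \<Rightarrow> bool" where
  "cyclotomic_semigroup S \<longleftrightarrow> numerical_semigroup S \<and>
     (\<forall>z::complex. poly (map_poly of_int (semigroup_poly S)) z = 0 \<longrightarrow> cmod z \<le> 1)"

end

theory Submission
  imports Defs "HOL-Computational_Algebra.Fundamental_Theorem_Algebra"
begin

lemma factor_root:
  fixes p :: "complex poly"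
  assumes "degree p > 0"
  obtains z p' where "poly p z = 0" "p = [:-z,1:] * p'" "p' \<noteq> 0" "degree p = Suc (degree p')"
proof -
  have "\<not> constant (poly p)" using assms constant_degree[of p] by simp
  then obtain z where z: "poly p z = 0" using fundamental_theorem_of_algebra by blast
  then obtain p' where p': "p = [:-z,1:] * p'" using poly_eq_0_iff_dvd dvd_def by blast
  have "p \<noteq> 0" using assms by auto
  then have "p' \<noteq> 0" using p' by auto
  then have "degree p = Suc (degree p')" unfolding p' by (subst degree_mult_eq) auto
  then show ?thesis using that z p' \<open>p' \<noteq> 0\<close> by blast
qed

lemma lemA:
  fixes p :: "complex poly"
  assumes "p \<noteq> 0" "\<forall>z. poly p z = 0 \<longrightarrow> cmod z \<le> 1"
  shows "cmod (poly p 0) \<le> cmod (lead_coeff p)"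
  using assms
proof (induction "degree p" arbitrary: p rule: less_induct)
  case less
  show ?case
  proof (cases "degree p = 0")
    case True
    then obtain c where "p = [:c:]" by (metis degree_eq_zeroE)
    then show ?thesis by simp
  next
    case False
    then obtain z p' where h: "poly p z = 0" "p = [:-z,1:] * p'" "p' \<noteq> 0" "degree p = Suc (degree p')"
      using factor_root by blast
    have r: "\<forall>w. poly p' w = 0 \<longrightarrow> cmod w \<le> 1" using less.prems h(2) by auto
    have ih: "cmod (poly p' 0) \<le> cmod (lead_coeff p')" using less.hyps[of p'] h r by simp
    have z: "cmod z \<le> 1" using less.prems h by auto
    have "cmod (poly p 0) = cmod z * cmod (poly p' 0)" using h(2) by (simp add: norm_mult)
    also have "\<dots> \<le> 1 * cmod (lead_coeff p')" using ih z by (intro mult_mono) auto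
    also have "\<dots> = cmod (lead_coeff p)" unfolding h(2) lead_coeff_mult by simp
    finally show ?thesis .
  qed
qed

lemma lemB:
  fixes p :: "complex poly"
  assumes "p \<noteq> 0" "\<forall>z. poly p z = 0 \<longrightarrow> cmod z \<le> 1" "cmod (poly p 0) = cmod (lead_coeff p)"
    and "poly p z = 0"
  shows "cmod z = 1"
proof (rule ccontr)
  assume "cmod z \<noteq> 1"
  then have z: "cmod z < 1" using assms by force
  obtain p' where p': "p = [:-z,1:] * p'" using assms(4) poly_eq_0_iff_dvd dvd_def by blast
  then have "p' \<noteq> 0" using assms(1) by auto
  have r: "\<forall>w. poly p' w = 0 \<longrightarrow> cmod w \<le> 1" using assms(2) p' by auto
  have ih: "cmod (poly p' 0) \<le> cmod (lead_coeff p')" using lemA[OF \<open>p' \<noteq> 0\<close> r] .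
  have lp: "cmod (lead_coeff p') > 0" using \<open>p' \<noteq> 0\<close> by simp
  have "cmod (poly p 0) = cmod z * cmod (poly p' 0)" using p' by (simp add: norm_mult)
  also have "\<dots> \<le> cmod z * cmod (lead_coeff p')" using ih by (simp add: mult_left_mono)
  also have "\<dots> < cmod (lead_coeff p')" using z lp by simp
  also have "\<dots> = cmod (lead_coeff p)" unfolding p' lead_coeff_mult by simp
  finally show False using assms(3) by simp
qed

lemma lemC:
  fixes p :: "complex poly"
  assumes "p \<noteq> 0" "\<forall>z. poly p z = 0 \<longrightarrow> cmod z = 1" "x \<noteq> 0"
  shows "x ^ degree p * poly p (inverse x) = (poly p 0 / cnj (lead_coeff p)) * cnj (poly p (cnj x))"
  using assms
proof (induction "degree p" arbitrary: p rule: less_induct)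
  case less
  show ?case
  proof (cases "degree p = 0")
    case True
    then obtain c where c: "p = [:c:]" by (metis degree_eq_zeroE)
    then have "c \<noteq> 0" using less.prems by auto
    then show ?thesis using c by simp
  next
    case False
    then obtain z p' where h: "poly p z = 0" "p = [:-z,1:] * p'" "p' \<noteq> 0" "degree p = Suc (degree p')"
      using factor_root by blast
    have r: "\<forall>w. poly p' w = 0 \<longrightarrow> cmod w = 1" using less.prems h(2) by auto
    have ih: "x ^ degree p' * poly p' (inverse x) = (poly p' 0 / cnj (lead_coeff p')) * cnj (poly p' (cnj x))"
      using less.hyps[of p'] h r less.prems by simp
    have "cmod z = 1" using less.prems h by auto
    then have zz: "z * cnj z = 1" using complex_norm_square[of z] by simp
    have lc: "lead_coeff p = lead_coeff p'" unfolding h(2) lead_coeff_mult by simp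
    have p0: "poly p 0 = - z * poly p' 0" by (subst h(2)) simp
    have pc: "cnj (poly p (cnj x)) = (x - cnj z) * cnj (poly p' (cnj x))" by (subst h(2)) (simp add: algebra_simps)
    have "x ^ degree p * poly p (inverse x) = (x * (inverse x - z)) * (x ^ degree p' * poly p' (inverse x))"
      unfolding h(4) by (subst h(2)) (simp add: algebra_simps)
    also have "x * (inverse x - z) = 1 - x * z" using less.prems by (simp add: field_simps)
    also have "1 - x * z = - z * (x - cnj z)" using zz by (simp add: algebra_simps)
    finally show ?thesis using ih unfolding lc p0 pc by (simp add: algebra_simps)
  qed
qed

definition sgf :: "nat set \<Rightarrow> nat \<Rightarrow> int" where
  "sgf S k = (if k \<in> S then 1 else 0) - (if k \<ge> 1 \<and> k - 1 \<in> S then 1 else 0)"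

lemma cofin:
  assumes "numerical_semigroup S"
  obtains N where "\<forall>k\<ge>N. k \<in> S"
proof -
  have fin: "finite (UNIV - S)" using assms numerical_semigroup_def by blast
  obtain N where "\<forall>k\<in>UNIV - S. k < N"
    using finite_nat_bounded[OF fin] by auto
  then show ?thesis using that by (meson DiffI UNIV_I not_less)
qed

lemma coeff_sp:
  assumes "numerical_semigroup S"
  shows "coeff (semigroup_poly S) k = sgf S k"
proof -
  obtain N where N: "\<forall>k\<ge>N. k \<in> S" using cofin assms by blast
  have "\<forall>\<^sub>\<infinity> n. sgf S n = 0"
    unfolding MOST_nat using N by (intro exI[of _ N]) (auto simp: sgf_def)
  then show ?thesis unfolding semigroup_poly_def sgf_def[symmetric, abs_def]
    by (simp add: Abs_poly_inverse)
qed

lemma sp_props: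
  assumes "numerical_semigroup S"
  shows "coeff (semigroup_poly S) 0 = 1" "lead_coeff (semigroup_poly S) = 1"
proof -
  have c: "\<And>k. coeff (semigroup_poly S) k = sgf S k" using coeff_sp assms by blast
  have "0 \<in> S" using assms numerical_semigroup_def by blast
  then show c0: "coeff (semigroup_poly S) 0 = 1" using c by (simp add: sgf_def)
  define d where "d = degree (semigroup_poly S)"
  have z: "\<And>k. k > d \<Longrightarrow> sgf S k = 0" using c d_def coeff_eq_0 by metis
  have allin: "\<forall>k\<ge>d. k \<in> S"
  proof (rule ccontr)
    assume "\<not> (\<forall>k\<ge>d. k \<in> S)"
    then obtain k0 where k0: "k0 \<ge> d" "k0 \<notin> S" by blast
    have "\<And>j. k0 + j \<notin> S"
    proof -
      fix j show "k0 + j \<notin> S"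
      proof (induction j)
        case 0 then show ?case using k0 by simp
      next
        case (Suc j)
        have "sgf S (Suc (k0 + j)) = 0" using z k0 by simp
        then show ?case using Suc by (simp add: sgf_def split: if_splits)
      qed
    qed
    moreover obtain N where "\<forall>k\<ge>N. k \<in> S" using cofin assms by blast
    ultimately show False by (metis le_add1 le_add2)
  qed
  have "sgf S d \<noteq> 0"
    using c d_def c0 by (metis leading_coeff_0_iff one_neq_zero poly_0_coeff_0 poly_0)
  then have "sgf S d = 1" using allin by (auto simp: sgf_def split: if_splits)
  then show "lead_coeff (semigroup_poly S) = 1" using c d_def by simp
qed

theorem corollary2:
  fixes S :: "nat set"
  assumes "cyclotomic_semigroup S"
  shows "\<forall>x::complex. x \<noteq> 0 \<longrightarrow>
    x ^ degree (semigroup_poly S) * poly (map_poly of_int (semigroup_poly S)) (1 / x)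
      = poly (map_poly of_int (semigroup_poly S)) x"
proof (intro allI impI)
  fix x :: complex assume x: "x \<noteq> 0"
  have ns: "numerical_semigroup S" and roots: "\<forall>z::complex. poly (map_poly of_int (semigroup_poly S)) z = 0 \<longrightarrow> cmod z \<le> 1"
    using assms cyclotomic_semigroup_def by auto
  define q :: "complex poly" where "q = map_poly of_int (semigroup_poly S)"
  have dq: "degree q = degree (semigroup_poly S)" unfolding q_def
    by (simp add: degree_map_poly)
  have lq: "lead_coeff q = 1" unfolding q_def using sp_props(2)[OF ns]
    by (simp add: degree_map_poly coeff_map_poly)
  have q0: "poly q 0 = 1" unfolding q_def using sp_props(1)[OF ns]
    by (simp add: poly_0_coeff_0 coeff_map_poly)
  have qnz: "q \<noteq> 0" using lq by auto
  have r1: "\<forall>z. poly q z = 0 \<longrightarrow> cmod z = 1"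
    using lemB[OF qnz] roots q0 lq unfolding q_def by auto
  have real: "\<And>n. coeff q n \<in> \<real>" unfolding q_def by (simp add: coeff_map_poly)
  have "x ^ degree q * poly q (inverse x) = (poly q 0 / cnj (lead_coeff q)) * cnj (poly q (cnj x))"
    using lemC[OF qnz r1 x] .
  also have "cnj (poly q (cnj x)) = poly q x" using poly_cnj_real[of q "cnj x"] real by simp
  finally show "x ^ degree (semigroup_poly S) * poly (map_poly of_int (semigroup_poly S)) (1 / x)
      = poly (map_poly of_int (semigroup_poly S)) x"
    using q0 lq dq unfolding q_def by (simp add: divide_inverse)
qed

end
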